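(* Let $\mathbf T$ be a countably infinite homogeneous tournament and $\mathbf T^*$ an expansion of $\mathbf T$ as in the context. If $\mathrm{Age}(\mathbf T^* )$ has the expansion property relative to $\mathrm{Age}(\mathbf T)$, then $\mathrm{Age}(I_\omega[\mathbf T]^* )$ has the expansion property relative to $\mathrm{Age}(I_\omega[\mathbf T])$, where $I_\omega[\mathbf T]$ is the reduct of $I_\omega[\mathbf T]^*$ to $\{E\}$.
   Context: The age $\mathrm{Age}(\mathbf F)$ of a structure $\mathbf F$ is the class of finite structures embeddable in $\mathbf F$. Expansion property: let $L\subseteq L^*$ be relational languages, $\mathcal K$ a class of finite $L$-structures and $\mathcal K^*$ a class of finite $L^*$-structures whose $L$-reducts lie in $\mathcal K$. $\mathcal K^*$ has the expansion property relative to $\mathcal K$ if for every $\mathbf A\in\mathcal K$ there is $\mathbf B\in\mathcal K$ such that for all $\mathbf A^*,\mathbf B^*\in\mathcal K^*$ whose $L$-reducts are $\mathbf A$ and $\mathbf B$ respectively, $\mathbf A^*$ embeds into $\mathbf B^*$. A tournament is a directed graph in which every pair of distinct vertices carries exactly one directed edge; it is homogeneous if every isomorphism between finite substructures extends to an automorphism. $\mathbf T=(T,E^{\mathbf T})$ is a countable homogeneous tournament, and $\mathbf T^*$ is an expansion of $\mathbf T$ to a countable relational language $L_{\mathbf T^*}\supseteq\{E,<\}$ in which $<$ is interpreted as a linear order $<^*$ on $T$. Fix a linear order $\prec$ on $\mathbb N$ with $(\mathbb N,\prec)\cong(\mathbb Q,<)$. The structure $I_\omega[\mathbf T]^*$ has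 universe $\mathbb N\times T$ and language $L_{\mathbf T^*}$, interpreted as: for each $m$-ary $R\in L_{\mathbf T^*}\setminus\{<\}$ (including $E$), $R((k_1,x_1),\dots,(k_m,x_m))$ iff $k_1=\dots=k_m$ and $R^{\mathbf T^*}(x_1,\dots,x_m)$; and $(i,x)<(j,y)$ iff $i\prec j$, or $i=j$ and $x<^*y$. *)

theory Defs
  imports Main "HOL-Library.Countable_Set"
begin

record ('l, 'a) rstruct =
  univ :: "'a set"
  rel :: "'l \<Rightarrow> 'a list \<Rightarrow> bool"

definition is_struct :: "'l set \<Rightarrow> ('l \<Rightarrow> nat) \<Rightarrow> ('l, 'a) rstruct \<Rightarrow> bool" where
  "is_struct L ar S \<longleftrightarrow>
     (\<forall>R xs. rel S R xs \<longrightarrow> R \<in> L \<and> length xs = ar R \<and> set xs \<subseteq> univ S)"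

definition reduct :: "'l set \<Rightarrow> ('l, 'a) rstruct \<Rightarrow> ('l, 'a) rstruct" where
  "reduct L' S = \<lparr>univ = univ S, rel = (\<lambda>R xs. R \<in> L' \<and> rel S R xs)\<rparr>"

definition embedding :: "'l set \<Rightarrow> ('l \<Rightarrow> nat) \<Rightarrow> ('a \<Rightarrow> 'b)
    \<Rightarrow> ('l, 'a) rstruct \<Rightarrow> ('l, 'b) rstruct \<Rightarrow> bool" where
  "embedding L ar f A B \<longleftrightarrow>
     inj_on f (univ A) \<and> f ` univ A \<subseteq> univ B \<and>
     (\<forall>R\<in>L. \<forall>xs. set xs \<subseteq> univ A \<and> length xs = ar R \<longrightarrow>
        (rel A R xs \<longleftrightarrow> rel B R (map f xs)))"

text \<open>The age: all finite L-structures embeddable in F. Up to isomorphism every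
  finite structure has a copy with universe a subset of nat, so we take
  representatives with universes in nat.\<close>
definition Age :: "'l set \<Rightarrow> ('l \<Rightarrow> nat) \<Rightarrow> ('l, 'a) rstruct \<Rightarrow> ('l, nat) rstruct set" where
  "Age L ar F = {A. is_struct L ar A \<and> finite (univ A) \<and> (\<exists>f. embedding L ar f A F)}"

definition expansion_property :: "'l set \<Rightarrow> 'l set \<Rightarrow> ('l \<Rightarrow> nat)
    \<Rightarrow> ('l, nat) rstruct set \<Rightarrow> ('l, nat) rstruct set \<Rightarrow> bool" where
  "expansion_property L Ls ar K Ks \<longleftrightarrow>
     (\<forall>A\<in>K. \<exists>B\<in>K. \<forall>As\<in>Ks. \<forall>Bs\<in>Ks.
        reduct L As = A \<longrightarrow> reduct L Bs = B \<longrightarrow> (\<exists>f. embedding Ls ar f As Bs))"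

definition tournament :: "'l \<Rightarrow> ('l, 'a) rstruct \<Rightarrow> bool" where
  "tournament E S \<longleftrightarrow>
     (\<forall>x\<in>univ S. \<not> rel S E [x, x]) \<and>
     (\<forall>x\<in>univ S. \<forall>y\<in>univ S. x \<noteq> y \<longrightarrow> (rel S E [x, y] \<longleftrightarrow> \<not> rel S E [y, x]))"

definition homogeneous :: "'l set \<Rightarrow> ('l \<Rightarrow> nat) \<Rightarrow> ('l, 'a) rstruct \<Rightarrow> bool" where
  "homogeneous L ar S \<longleftrightarrow>
     (\<forall>X Y g. finite X \<and> X \<subseteq> univ S \<and> Y \<subseteq> univ S \<and> bij_betw g X Y \<and>
        (\<forall>R\<in>L. \<forall>xs. set xs \<subseteq> X \<and> length xs = ar R \<longrightarrow> (rel S R xs \<longleftrightarrow> rel S R (map g xs)))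
      \<longrightarrow> (\<exists>\<sigma>. bij_betw \<sigma> (univ S) (univ S) \<and>
            (\<forall>R\<in>L. \<forall>xs. set xs \<subseteq> univ S \<and> length xs = ar R \<longrightarrow>
               (rel S R xs \<longleftrightarrow> rel S R (map \<sigma> xs))) \<and>
            (\<forall>x\<in>X. \<sigma> x = g x)))"

definition strict_linear :: "'l \<Rightarrow> ('l, 'a) rstruct \<Rightarrow> bool" where
  "strict_linear Lt S \<longleftrightarrow>
     (\<forall>x\<in>univ S. \<not> rel S Lt [x, x]) \<and>
     (\<forall>x\<in>univ S. \<forall>y\<in>univ S. \<forall>z\<in>univ S. rel S Lt [x, y] \<and> rel S Lt [y, z] \<longrightarrow> rel S Lt [x, z]) \<and>
     (\<forall>x\<in>univ S. \<forall>y\<in>univ S. x \<noteq> y \<longrightarrow> rel S Lt [x, y] \<or> rel S Lt [y, x])"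

definition I_omega_star :: "'l \<Rightarrow> (nat \<Rightarrow> nat \<Rightarrow> bool) \<Rightarrow> ('l, 'a) rstruct
    \<Rightarrow> ('l, nat \<times> 'a) rstruct" where
  "I_omega_star Lt prec Ts =
     \<lparr>univ = UNIV \<times> univ Ts,
      rel = (\<lambda>R xs.
        if R = Lt then
          (\<exists>i x j y. xs = [(i, x), (j, y)] \<and> x \<in> univ Ts \<and> y \<in> univ Ts \<and>
             (prec i j \<or> (i = j \<and> rel Ts Lt [x, y])))
        else
          (\<forall>p\<in>set xs. \<forall>q\<in>set xs. fst p = fst q) \<and> rel Ts R (map snd xs))\<rparr>"

end

theory Submission
  imports Defs
begin

definition pull :: "('l,'b) rstruct \<Rightarrow> 'a set \<Rightarrow> ('a \<Rightarrow> 'b) \<Rightarrow> ('l,'a) rstruct" where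
  "pull C Y m = \<lparr>univ = Y, rel = (\<lambda>R xs. set xs \<subseteq> Y \<and> rel C R (map m xs))\<rparr>"

lemma pull_simps[simp]: "univ (pull C Y m) = Y"
  "rel (pull C Y m) R xs = (set xs \<subseteq> Y \<and> rel C R (map m xs))"
  by (simp_all add: pull_def)

lemma reduct_simps[simp]: "univ (reduct L C) = univ C"
  "rel (reduct L C) R xs = (R \<in> L \<and> rel C R xs)"
  by (simp_all add: reduct_def)

lemma pull_struct: "is_struct L ar C \<Longrightarrow> is_struct L ar (pull C Y m)"
  unfolding is_struct_def pull_simps by (metis length_map)

lemma reduct_struct: "is_struct L' ar C \<Longrightarrow> is_struct L ar (reduct L C)"
  unfolding is_struct_def by auto

lemma pull_emb:
  assumes "embedding L ar g C D" "inj_on m Y" "m ` Y \<subseteq> univ C"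
  shows "embedding L ar (g \<circ> m) (pull C Y m) D"
proof -
  have ig: "inj_on g (univ C)" using assms(1) by (simp add: embedding_def)
  show ?thesis unfolding embedding_def
  proof (intro conjI ballI allI impI)
    show "inj_on (g \<circ> m) (univ (pull C Y m))"
      using ig assms(2,3) by (auto intro: comp_inj_on inj_on_subset)
    show "(g \<circ> m) ` univ (pull C Y m) \<subseteq> univ D" using assms(1,3) by (auto simp: embedding_def)
  next
    fix R xs assume R: "R \<in> L" and xs: "set xs \<subseteq> univ (pull C Y m) \<and> length xs = ar R"
    then have "set (map m xs) \<subseteq> univ C" "length (map m xs) = ar R" using assms(3) by auto
    then have "rel C R (map m xs) = rel D R (map g (map m xs))"
      using assms(1) R unfolding embedding_def by blast
    then show "rel (pull C Y m) R xs = rel D R (map (g \<circ> m) xs)" using xs by simp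
  qed
qed

lemma emb_id: "embedding L ar id C C"
  by (simp add: embedding_def)

lemma emb_reduct_iff: "embedding L ar g C (reduct L D) = embedding L ar g C D"
  by (simp add: embedding_def)

lemma emb_reduct2:
  assumes "embedding L' ar g C D" "L \<subseteq> L'"
  shows "embedding L ar g (reduct L C) (reduct L D)"
  using assms unfolding embedding_def by auto

lemma AgeI: "is_struct L ar C \<Longrightarrow> finite (univ C) \<Longrightarrow> embedding L ar g C D \<Longrightarrow> C \<in> Age L ar D"
  unfolding Age_def by auto

lemma reduct_pull: "reduct L (pull C Y m) = pull (reduct L C) Y m"
  by (simp add: reduct_def pull_def) (intro ext; blast)

lemma I_univ[simp]: "univ (I_omega_star Lt prec Ts) = UNIV \<times> univ Ts"
  by (simp add: I_omega_star_def)

lemma I_rel_other: "R \<noteq> Lt \<Longrightarrow> rel (I_omega_star Lt prec Ts) R xs =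
   ((\<forall>p\<in>set xs. \<forall>q\<in>set xs. fst p = fst q) \<and> rel Ts R (map snd xs))"
  by (simp add: I_omega_star_def)

lemma I_rel_Lt: "rel (I_omega_star Lt prec Ts) Lt xs =
   (\<exists>i x j y. xs = [(i, x), (j, y)] \<and> x \<in> univ Ts \<and> y \<in> univ Ts \<and>
             (prec i j \<or> (i = j \<and> rel Ts Lt [x, y])))"
  by (simp add: I_omega_star_def)

lemma I_rel_other_pair: "R \<noteq> Lt \<Longrightarrow> rel (I_omega_star Lt prec Ts) R [p, q] =
   (fst p = fst q \<and> rel Ts R [snd p, snd q])"
  by (simp add: I_rel_other) (metis)

lemma I_rel_Lt_pair: "rel (I_omega_star Lt prec Ts) Lt [p, q] =
   (snd p \<in> univ Ts \<and> snd q \<in> univ Ts \<and> (prec (fst p) (fst q) \<or> (fst p = fst q \<and> rel Ts Lt [snd p, snd q])))"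
  unfolding I_rel_Lt by (cases p, cases q) simp

lemma I_struct:
  assumes "is_struct Ls ar Ts" "Lt \<in> Ls" "ar Lt = 2"
  shows "is_struct Ls ar (I_omega_star Lt prec Ts)"
  unfolding is_struct_def
proof (intro allI impI)
  fix R xs assume r: "rel (I_omega_star Lt prec Ts) R xs"
  show "R \<in> Ls \<and> length xs = ar R \<and> set xs \<subseteq> univ (I_omega_star Lt prec Ts)"
  proof (cases "R = Lt")
    case True then show ?thesis using r assms by (auto simp: I_rel_Lt)
  next
    case False
    then have "rel Ts R (map snd xs)" using r by (simp add: I_rel_other)
    then have "R \<in> Ls" "length (map snd xs) = ar R" "set (map snd xs) \<subseteq> univ Ts" using assms(1) unfolding is_struct_def by blast+
    then show ?thesis by auto
  qed
qed

lemma emb_apply: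
  assumes "embedding L ar g C D" "R \<in> L" "set xs \<subseteq> univ C" "length xs = ar R"
  shows "rel C R xs = rel D R (map g xs)"
  using assms unfolding embedding_def by blast

lemma emb_into:
  assumes "embedding L ar g C D" "x \<in> univ C" shows "g x \<in> univ D"
  using assms unfolding embedding_def by blast

lemma emb_inj:
  assumes "embedding L ar g C D" "x \<in> univ C" "y \<in> univ C" "g x = g y" shows "x = y"
  using assms unfolding embedding_def by (meson inj_onD)

lemma emb_snd:
  assumes "embedding L ar g C (I_omega_star Lt prec Ts)" "y \<in> univ C"
  shows "snd (g y) \<in> univ Ts"
proof -
  have "g y \<in> univ (I_omega_star Lt prec Ts)" by (rule emb_into[OF assms])
  then show ?thesis by (simp add: mem_Times_iff)
qed

lemma one_block:
  assumes emb: "embedding L ar g C (I_omega_star Lt prec Ts)"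
    and blk: "\<forall>y\<in>univ C. fst (g y) = c" and np: "\<not> prec c c" and arLt: "ar Lt = 2"
  shows "embedding L ar (snd \<circ> g) C Ts"
  unfolding embedding_def
proof (intro conjI ballI allI impI)
  show "inj_on (snd \<circ> g) (univ C)"
  proof (rule inj_onI)
    fix x y assume xy: "x \<in> univ C" "y \<in> univ C" "(snd \<circ> g) x = (snd \<circ> g) y"
    then have "g x = g y" using blk by (simp add: prod_eq_iff)
    then show "x = y" using emb_inj[OF emb] xy by blast
  qed
  show "(snd \<circ> g) ` univ C \<subseteq> univ Ts" using emb_snd[OF emb] by auto
next
  fix R xs assume R: "R \<in> L" and xs: "set xs \<subseteq> univ C \<and> length xs = ar R"
  have e: "rel C R xs = rel (I_omega_star Lt prec Ts) R (map g xs)"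
    using emb_apply[OF emb R] xs by blast
  show "rel C R xs = rel Ts R (map (snd \<circ> g) xs)"
  proof (cases "R = Lt")
    case True
    then have "length xs = 2" using xs arLt by simp
    then have "\<exists>a b. xs = [a,b]" by (auto simp: length_Suc_conv numeral_2_eq_2)
    then obtain a b where ab: "xs = [a, b]" by blast
    have a: "a \<in> univ C" and b: "b \<in> univ C" using xs ab by auto
    have "fst (g a) = c" "fst (g b) = c" using blk a b by auto
    moreover have "snd (g a) \<in> univ Ts" "snd (g b) \<in> univ Ts" using emb_snd[OF emb] a b by auto
    ultimately show ?thesis using e True ab np by (simp add: I_rel_Lt_pair)
  next
    case False
    have allc: "\<forall>p\<in>set xs. fst (g p) = c" using blk xs by blast
    have allq: "\<forall>p\<in>set (map g xs). \<forall>q\<in>set (map g xs). fst p = fst q"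
    proof (intro ballI)
      fix p q assume "p \<in> set (map g xs)" "q \<in> set (map g xs)"
      then obtain x y where "x \<in> set xs" "p = g x" "y \<in> set xs" "q = g y" by auto
      then show "fst p = fst q" using allc by metis
    qed
    have "rel (I_omega_star Lt prec Ts) R (map g xs) = ((\<forall>p\<in>set (map g xs). \<forall>q\<in>set (map g xs). fst p = fst q) \<and> rel Ts R (map snd (map g xs)))"
      by (rule I_rel_other[OF False])
    then have "rel (I_omega_star Lt prec Ts) R (map g xs) = rel Ts R (map snd (map g xs))"
      using allq by blast
    then show ?thesis using e by simp
  qed
qed

lemma diff_block_other:
  assumes emb: "embedding L ar g C (I_omega_star Lt prec Ts)" "R \<in> L" "R \<noteq> Lt"
    "set xs \<subseteq> univ C" "length xs = ar R" "x \<in> set xs" "y \<in> set xs" "fst (g x) \<noteq> fst (g y)"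
  shows "\<not> rel C R xs"
proof
  assume "rel C R xs"
  then have "rel (I_omega_star Lt prec Ts) R (map g xs)" using emb_apply[OF assms(1,2,4,5)] by blast
  then have "\<forall>p\<in>set (map g xs). \<forall>q\<in>set (map g xs). fst p = fst q" using I_rel_other[OF assms(3)] by blast
  moreover have "g x \<in> set (map g xs)" "g y \<in> set (map g xs)" using assms(6,7) by auto
  ultimately show False using assms(8) by blast
qed

lemma diff_block_Lt:
  assumes emb: "embedding L ar g C (I_omega_star Lt prec Ts)" "Lt \<in> L" "ar Lt = 2"
    "a \<in> univ C" "b \<in> univ C" "fst (g a) \<noteq> fst (g b)"
  shows "rel C Lt [a, b] = prec (fst (g a)) (fst (g b))"
proof -
  have e: "rel C Lt [a,b] = rel (I_omega_star Lt prec Ts) Lt [g a, g b]"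
    using emb_apply[OF assms(1,2)] assms(3,4,5) by simp
  have "snd (g a) \<in> univ Ts" "snd (g b) \<in> univ Ts" using emb_snd[OF assms(1)] assms(4,5) by auto
  then show ?thesis using e assms(6) by (simp add: I_rel_Lt_pair)
qed

lemma block_lemma:
  assumes tour: "tournament E (reduct {E} Ts)" and EL: "E \<noteq> Lt" and arE: "ar E = 2"
    and emb: "embedding {E} ar g C (reduct {E} (I_omega_star Lt prec Ts))"
    and x: "x \<in> univ C" and y: "y \<in> univ C"
  shows "(fst (g x) = fst (g y)) \<longleftrightarrow> (x = y \<or> rel C E [x, y] \<or> rel C E [y, x])"
proof -
  have emb': "embedding {E} ar g C (I_omega_star Lt prec Ts)" using emb emb_reduct_iff by metis
  have r1: "rel C E [x,y] = (fst (g x) = fst (g y) \<and> rel Ts E [snd (g x), snd (g y)])"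
    using emb_apply[OF emb', of E "[x,y]"] x y arE I_rel_other_pair[OF EL] by simp
  have r2: "rel C E [y,x] = (fst (g y) = fst (g x) \<and> rel Ts E [snd (g y), snd (g x)])"
    using emb_apply[OF emb', of E "[y,x]"] x y arE I_rel_other_pair[OF EL] by simp
  have s: "snd (g x) \<in> univ Ts" "snd (g y) \<in> univ Ts" using emb_snd[OF emb'] x y by auto
  show ?thesis
  proof
    assume f: "fst (g x) = fst (g y)"
    show "x = y \<or> rel C E [x, y] \<or> rel C E [y, x]"
    proof (cases "x = y")
      case False
      then have "g x \<noteq> g y" using emb_inj[OF emb'] x y by blast
      then have "snd (g x) \<noteq> snd (g y)" using f by (simp add: prod_eq_iff)
      then have "rel Ts E [snd (g x), snd (g y)] \<or> rel Ts E [snd (g y), snd (g x)]"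
        using tour s unfolding tournament_def reduct_simps by blast
      then show ?thesis
      proof
        assume B1: "rel Ts E [snd (g x), snd (g y)]"
        have "rel C E [x,y]" unfolding r1 using f B1 by blast
        then show ?thesis by blast
      next
        assume B2: "rel Ts E [snd (g y), snd (g x)]"
        have "rel C E [y,x]" unfolding r2 using f[symmetric] B2 by blast
        then show ?thesis by blast
      qed
    qed simp
  next
    assume "x = y \<or> rel C E [x, y] \<or> rel C E [y, x]"
    then show "fst (g x) = fst (g y)"
    proof (elim disjE)
      assume "rel C E [x, y]" then show ?thesis unfolding r1 by blast
    next
      assume "rel C E [y, x]" then have "fst (g y) = fst (g x)" unfolding r2 by blast
      then show ?thesis by (rule sym)
    qed simp
  qed
qed

lemma rank_lemma:
  fixes H :: "'k \<Rightarrow> 'b::linorder"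
  assumes fin: "finite K" and inj: "inj_on H K"
  shows "\<forall>k1\<in>K. \<forall>k2\<in>K. H k1 < H k2 \<longleftrightarrow> card {k\<in>K. H k < H k1} < card {k\<in>K. H k < H k2}"
    and "(\<lambda>k0. card {k\<in>K. H k < H k0}) ` K = {..<card K}"
proof -
  let ?r = "\<lambda>k0. card {k\<in>K. H k < H k0}"
  have mono: "?r k1 < ?r k2" if "k1 \<in> K" "k2 \<in> K" "H k1 < H k2" for k1 k2
  proof (rule psubset_card_mono)
    show "finite {k\<in>K. H k < H k2}" using fin by auto
    show "{k\<in>K. H k < H k1} \<subset> {k\<in>K. H k < H k2}" using that by auto
  qed
  show A: "\<forall>k1\<in>K. \<forall>k2\<in>K. H k1 < H k2 \<longleftrightarrow> ?r k1 < ?r k2"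
  proof (intro ballI iffI)
    fix k1 k2 assume k: "k1 \<in> K" "k2 \<in> K"
    { assume "H k1 < H k2" then show "?r k1 < ?r k2" using mono k by blast }
    { assume rr: "?r k1 < ?r k2"
      show "H k1 < H k2"
      proof (rule ccontr)
        assume "\<not> H k1 < H k2"
        then consider "H k1 = H k2" | "H k2 < H k1" by fastforce
        then show False
        proof cases
          case 1 then have "k1 = k2" using inj k by (meson inj_onD)
          then show False using rr by simp
        next
          case 2 then show False using mono[OF k(2) k(1)] rr by simp
        qed
      qed }
  qed
  have injr: "inj_on ?r K"
  proof (rule inj_onI)
    fix k1 k2 assume k: "k1 \<in> K" "k2 \<in> K" and e: "?r k1 = ?r k2"
    then have "\<not> H k1 < H k2" "\<not> H k2 < H k1" using A by auto
    then have "H k1 = H k2" by simp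
    then show "k1 = k2" using inj k by (meson inj_onD)
  qed
  have sub: "?r ` K \<subseteq> {..<card K}"
  proof
    fix n assume "n \<in> ?r ` K"
    then obtain k where k: "k \<in> K" "n = ?r k" by blast
    have "{k2\<in>K. H k2 < H k} \<subset> K" using k by auto
    then have "?r k < card K" using fin by (simp add: psubset_card_mono)
    then show "n \<in> {..<card K}" using k by simp
  qed
  show "?r ` K = {..<card K}"
    using card_subset_eq[OF _ sub] card_image[OF injr] by simp
qed

theorem mainTheorem10:
  fixes E Lt :: 'l
    and Ls :: "'l set"
    and ar :: "'l \<Rightarrow> nat"
    and Ts :: "('l, 'a) rstruct"
    and prec :: "nat \<Rightarrow> nat \<Rightarrow> bool"
  assumes lang: "countable Ls" "E \<in> Ls" "Lt \<in> Ls" "E \<noteq> Lt" "ar E = 2" "ar Lt = 2"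
    and struct: "is_struct Ls ar Ts"
    and countable_inf: "countable (univ Ts)" "infinite (univ Ts)"
    and tour: "tournament E (reduct {E} Ts)"
    and hom: "homogeneous {E} ar (reduct {E} Ts)"
    and lin: "strict_linear Lt Ts"
    and prec_Q: "\<exists>h :: nat \<Rightarrow> rat. bij h \<and> (\<forall>i j. prec i j \<longleftrightarrow> h i < h j)"
    and EP: "expansion_property {E} Ls ar (Age {E} ar (reduct {E} Ts)) (Age Ls ar Ts)"
  shows "expansion_property {E} Ls ar
           (Age {E} ar (reduct {E} (I_omega_star Lt prec Ts)))
           (Age Ls ar (I_omega_star Lt prec Ts))"
proof -
  let ?I = "I_omega_star Lt prec Ts"
  obtain hq :: "nat \<Rightarrow> rat" where hq: "bij hq" "\<And>i j. prec i j \<longleftrightarrow> hq i < hq j"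
    using prec_Q by blast
  have np: "\<not> prec c c" for c using hq by simp
  have hqinj: "inj_on hq Z" for Z using bij_is_inj[OF hq(1)] by (meson inj_on_subset subset_UNIV)
  have Istruct: "is_struct Ls ar ?I" using I_struct[OF struct lang(3) lang(6)] .
  have IEstruct: "is_struct {E} ar (reduct {E} ?I)" by (rule reduct_struct[OF Istruct])
  have EsubLs: "{E} \<subseteq> Ls" using lang(2) by simp
  show ?thesis unfolding expansion_property_def
  proof (intro ballI)
    fix A assume "A \<in> Age {E} ar (reduct {E} ?I)"
    then obtain f where Astr: "is_struct {E} ar A" and Afin: "finite (univ A)"
      and f: "embedding {E} ar f A (reduct {E} ?I)"
      unfolding Age_def by blast
    have fI: "embedding {E} ar f A ?I" using f emb_reduct_iff by metis
    define K where "K = fst ` f ` univ A"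
    define blk where "blk k = {x \<in> univ A. fst (f x) = k}" for k
    define Ak where "Ak k = pull A (blk k) id" for k
    have Kfin: "finite K" using Afin K_def by simp
    have Ak_age: "Ak k \<in> Age {E} ar (reduct {E} Ts)" for k
    proof -
      have e1: "embedding {E} ar (f \<circ> id) (Ak k) ?I" unfolding Ak_def
        by (rule pull_emb[OF fI]) (auto simp: blk_def)
      have "embedding {E} ar (snd \<circ> (f \<circ> id)) (Ak k) Ts"
        by (rule one_block[OF e1 _ np[of k] lang(6)]) (auto simp: Ak_def blk_def)
      then have "embedding {E} ar (snd \<circ> (f \<circ> id)) (Ak k) (reduct {E} Ts)"
        using emb_reduct_iff by metis
      moreover have "is_struct {E} ar (Ak k)" unfolding Ak_def by (rule pull_struct[OF Astr])
      moreover have "finite (univ (Ak k))" using Afin by (simp add: Ak_def blk_def)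
      ultimately show ?thesis using AgeI by blast
    qed
    have "\<forall>k\<in>K. \<exists>B. B \<in> Age {E} ar (reduct {E} Ts) \<and> (\<forall>As\<in>Age Ls ar Ts. \<forall>Bs\<in>Age Ls ar Ts.
        reduct {E} As = Ak k \<longrightarrow> reduct {E} Bs = B \<longrightarrow> (\<exists>e. embedding Ls ar e As Bs))"
      using EP Ak_age unfolding expansion_property_def by blast
    from bchoice[OF this] obtain Bk where BkA: "\<forall>k\<in>K. Bk k \<in> Age {E} ar (reduct {E} Ts) \<and> (\<forall>As\<in>Age Ls ar Ts. \<forall>Bs\<in>Age Ls ar Ts.
        reduct {E} As = Ak k \<longrightarrow> reduct {E} Bs = Bk k \<longrightarrow> (\<exists>e. embedding Ls ar e As Bs))"
      by blast
    have "\<forall>k\<in>K. \<exists>hh. embedding {E} ar hh (Bk k) (reduct {E} Ts)"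
      using BkA unfolding Age_def by blast
    from bchoice[OF this] obtain hk where hk: "\<forall>k\<in>K. embedding {E} ar (hk k) (Bk k) (reduct {E} Ts)"
      by blast
    have hkT: "embedding {E} ar (hk k) (Bk k) Ts" if "k \<in> K" for k
      using hk that emb_reduct_iff by metis
    have Bkstr: "is_struct {E} ar (Bk k)" "finite (univ (Bk k))" if "k \<in> K" for k
      using BkA that unfolding Age_def by auto
    obtain t0 where t0: "t0 \<in> univ Ts" using countable_inf(2) by (metis ex_in_conv finite.emptyI)
    define S where "S = insert t0 (\<Union>k\<in>K. hk k ` univ (Bk k))"
    have hkS: "hk k u \<in> S" if "k \<in> K" "u \<in> univ (Bk k)" for k u
      using that S_def by blast
    have STs: "S \<subseteq> univ Ts" using t0 emb_into[OF hkT] unfolding S_def by blast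
    have Sfin: "finite S" unfolding S_def using Kfin Bkstr(2) by blast
    define X where "X = K \<times> S"
    have Xfin: "finite X" using Kfin Sfin X_def by simp
    define \<phi> where "\<phi> = to_nat_on X"
    have \<phi>inj: "inj_on \<phi> X" unfolding \<phi>_def using Xfin by (simp add: countable_finite inj_on_to_nat_on)
    define \<psi> where "\<psi> = inv_into X \<phi>"
    have \<psi>\<phi>: "\<psi> (\<phi> z) = z" if "z \<in> X" for z using \<phi>inj that \<psi>_def by simp
    define B where "B = pull (reduct {E} ?I) (\<phi> ` X) \<psi>"
    have \<psi>E: "embedding {E} ar (id \<circ> \<psi>) B (reduct {E} ?I)" unfolding B_def
    proof (rule pull_emb[OF emb_id])
      show "inj_on \<psi> (\<phi> ` X)" by (simp add: \<psi>_def inj_on_inv_into)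
      show "\<psi> ` \<phi> ` X \<subseteq> univ (reduct {E} ?I)" using \<psi>\<phi> STs by (force simp: X_def)
    qed
    have BAge: "B \<in> Age {E} ar (reduct {E} ?I)"
      by (rule AgeI[OF _ _ \<psi>E]) (auto simp: B_def Xfin intro: pull_struct[OF IEstruct])
    show "\<exists>B\<in>Age {E} ar (reduct {E} ?I). \<forall>As\<in>Age Ls ar ?I. \<forall>Bs\<in>Age Ls ar ?I.
        reduct {E} As = A \<longrightarrow> reduct {E} Bs = B \<longrightarrow> (\<exists>f. embedding Ls ar f As Bs)"
    proof (intro bexI[OF _ BAge] ballI impI)
      fix As Bs assume "As \<in> Age Ls ar ?I" "Bs \<in> Age Ls ar ?I" and rA: "reduct {E} As = A"
        and rB: "reduct {E} Bs = B"
      from \<open>As \<in> Age Ls ar ?I\<close> obtain gA where AsS: "is_struct Ls ar As" and gA: "embedding Ls ar gA As ?I"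
        unfolding Age_def by blast
      from \<open>Bs \<in> Age Ls ar ?I\<close> obtain gB where BsS: "is_struct Ls ar Bs" and gB: "embedding Ls ar gB Bs ?I"
        unfolding Age_def by blast
      have uA: "univ As = univ A" using rA by (metis reduct_simps(1))
      have uB: "univ Bs = \<phi> ` X" using rB by (metis reduct_simps(1) pull_simps(1) B_def)
      have relB: "rel Bs E ys = rel B E ys" for ys using rB by (metis reduct_simps(2) singletonI)
      have gAE: "embedding {E} ar gA A (reduct {E} ?I)" using emb_reduct2[OF gA EsubLs] rA by simp
      have gBE: "embedding {E} ar gB B (reduct {E} ?I)" using emb_reduct2[OF gB EsubLs] rB by simp
      have blockA: "fst (f x) = fst (f y) \<longleftrightarrow> fst (gA x) = fst (gA y)" if "x \<in> univ A" "y \<in> univ A" for x y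
        using block_lemma[OF tour lang(4) lang(5) f that] block_lemma[OF tour lang(4) lang(5) gAE that] by simp
      have blockB: "fst (\<psi> u) = fst (\<psi> v) \<longleftrightarrow> fst (gB u) = fst (gB v)" if "u \<in> univ B" "v \<in> univ B" for u v
        using block_lemma[OF tour lang(4) lang(5) \<psi>E that] block_lemma[OF tour lang(4) lang(5) gBE that] by simp
      have uB': "univ B = \<phi> ` X" by (simp add: B_def)
      define PA where "PA k = fst (gA (SOME x. x \<in> blk k))" for k
      have PA_eq: "fst (gA x) = PA (fst (f x))" if "x \<in> univ A" for x
      proof -
        have "x \<in> blk (fst (f x))" using that blk_def by simp
        then have y: "(SOME x'. x' \<in> blk (fst (f x))) \<in> blk (fst (f x))" by (rule someI)
        show ?thesis unfolding PA_def using blockA[OF _ that] y unfolding blk_def by auto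
      qed
      have PAinj: "inj_on PA K"
      proof (rule inj_onI)
        fix k1 k2 assume "k1 \<in> K" "k2 \<in> K" "PA k1 = PA k2"
        then obtain x1 x2 where "x1 \<in> univ A" "x2 \<in> univ A" "k1 = fst (f x1)" "k2 = fst (f x2)" "PA k1 = PA k2"
          unfolding K_def by blast
        then show "k1 = k2" using PA_eq blockA by metis
      qed
      define PB where "PB k' = fst (gB (\<phi> (k', t0)))" for k'
      have \<phi>B: "\<phi> (k', s) \<in> univ B" if "k' \<in> K" "s \<in> S" for k' s using that uB' X_def by blast
      have PB_eq: "fst (gB (\<phi> (k', s))) = PB k'" if "k' \<in> K" "s \<in> S" for k' s
      proof -
        have "t0 \<in> S" using S_def by simp
        then show ?thesis unfolding PB_def using blockB[OF \<phi>B[OF that] \<phi>B[OF that(1)]] that \<psi>\<phi> X_def by simp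
      qed
      have PBinj: "inj_on PB K"
      proof (rule inj_onI)
        fix k1 k2 assume k: "k1 \<in> K" "k2 \<in> K" "PB k1 = PB k2"
        have "t0 \<in> S" using S_def by simp
        then show "k1 = k2" using blockB[OF \<phi>B[OF k(1)] \<phi>B[OF k(2)]] k \<psi>\<phi> X_def unfolding PB_def by simp
      qed
      define rA' where "rA' k0 = card {k\<in>K. (hq \<circ> PA) k < (hq \<circ> PA) k0}" for k0
      define rB' where "rB' k0 = card {k\<in>K. (hq \<circ> PB) k < (hq \<circ> PB) k0}" for k0
      have injA: "inj_on (hq \<circ> PA) K" using PAinj hqinj by (simp add: comp_inj_on)
      have injB: "inj_on (hq \<circ> PB) K" using PBinj hqinj by (simp add: comp_inj_on)
      note RA = rank_lemma[OF Kfin injA, folded rA'_def]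
      note RB = rank_lemma[OF Kfin injB, folded rB'_def]
      define \<sigma> where "\<sigma> k = inv_into K rB' (rA' k)" for k
      have \<sigma>K: "\<sigma> k \<in> K" and r\<sigma>: "rB' (\<sigma> k) = rA' k" if "k \<in> K" for k
      proof -
        have "rA' k \<in> rB' ` K" using RA(2) RB(2) that by auto
        then show "\<sigma> k \<in> K" "rB' (\<sigma> k) = rA' k" unfolding \<sigma>_def by (auto intro: inv_into_into f_inv_into_f)
      qed
      have \<sigma>ord: "prec (PA k1) (PA k2) \<longleftrightarrow> prec (PB (\<sigma> k1)) (PB (\<sigma> k2))" if "k1 \<in> K" "k2 \<in> K" for k1 k2
        using RA(1) RB(1) that \<sigma>K r\<sigma> hq(2) by simp
      have \<sigma>inj: "k1 = k2" if "k1 \<in> K" "k2 \<in> K" "\<sigma> k1 = \<sigma> k2" for k1 k2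
      proof -
        have "rA' k1 = rA' k2" using r\<sigma> that by metis
        then have "\<not> (hq \<circ> PA) k1 < (hq \<circ> PA) k2" "\<not> (hq \<circ> PA) k2 < (hq \<circ> PA) k1" using RA(1) that by auto
        then have "(hq \<circ> PA) k1 = (hq \<circ> PA) k2" by simp
        then show ?thesis using injA that by (meson inj_onD)
      qed
      define Ask where "Ask k = pull As (blk k) id" for k
      have Ask_red: "reduct {E} (Ask k) = Ak k" for k
        unfolding Ask_def Ak_def reduct_pull rA ..
      have Ask_age: "Ask k \<in> Age Ls ar Ts" for k
      proof -
        have e1: "embedding Ls ar (gA \<circ> id) (Ask k) ?I" unfolding Ask_def
          by (rule pull_emb[OF gA]) (auto simp: blk_def uA)
        have "embedding Ls ar (snd \<circ> (gA \<circ> id)) (Ask k) Ts"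
          by (rule one_block[OF e1 _ np[of "PA k"] lang(6)]) (auto simp: Ask_def blk_def PA_eq)
        moreover have "is_struct Ls ar (Ask k)" unfolding Ask_def by (rule pull_struct[OF AsS])
        moreover have "finite (univ (Ask k))" using Afin by (simp add: Ask_def blk_def)
        ultimately show ?thesis using AgeI by blast
      qed
      define m where "m k' k u = \<phi> (k', hk k u)" for k' k u
      define Bsk where "Bsk k' k = pull Bs (univ (Bk k)) (m k' k)" for k' k
      have m_inj: "inj_on (m k' k) (univ (Bk k))" if "k' \<in> K" "k \<in> K" for k' k
      proof (rule inj_onI)
        fix u v assume uv: "u \<in> univ (Bk k)" "v \<in> univ (Bk k)" "m k' k u = m k' k v"
        then have "(k', hk k u) = (k', hk k v)" using \<phi>inj hkS that X_def unfolding m_def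
          by (simp add: inj_on_eq_iff)
        then show "u = v" using emb_inj[OF hkT[OF that(2)]] uv by simp
      qed
      have m_into: "m k' k ` univ (Bk k) \<subseteq> univ Bs" if "k' \<in> K" "k \<in> K" for k' k
        using \<phi>B hkS that uB uB' unfolding m_def by auto
      have Bsk_age: "Bsk k' k \<in> Age Ls ar Ts" if "k' \<in> K" "k \<in> K" for k' k
      proof -
        have e1: "embedding Ls ar (gB \<circ> m k' k) (Bsk k' k) ?I" unfolding Bsk_def
          by (rule pull_emb[OF gB m_inj[OF that] m_into[OF that]])
        have "embedding Ls ar (snd \<circ> (gB \<circ> m k' k)) (Bsk k' k) Ts"
          by (rule one_block[OF e1 _ np[of "PB k'"] lang(6)])
            (use that in \<open>auto simp: Bsk_def m_def PB_eq hkS\<close>)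
        moreover have "is_struct Ls ar (Bsk k' k)" unfolding Bsk_def by (rule pull_struct[OF BsS])
        moreover have "finite (univ (Bsk k' k))" using Bkstr(2)[OF that(2)] by (simp add: Bsk_def)
        ultimately show ?thesis using AgeI by blast
      qed
      have Bsk_red: "reduct {E} (Bsk k' k) = Bk k" if "k' \<in> K" "k \<in> K" for k' k
      proof -
        have "reduct {E} (Bsk k' k) = pull B (univ (Bk k)) (m k' k)"
          unfolding Bsk_def reduct_pull rB ..
        also have "\<dots> = Bk k"
        proof (rule rstruct.equality)
          show "univ (pull B (univ (Bk k)) (m k' k)) = univ (Bk k)" by simp
          show "rstruct.more (pull B (univ (Bk k)) (m k' k)) = rstruct.more (Bk k)" by simp
          show "rel (pull B (univ (Bk k)) (m k' k)) = rel (Bk k)"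
          proof (intro ext)
            fix R xs
            show "rel (pull B (univ (Bk k)) (m k' k)) R xs = rel (Bk k) R xs"
            proof (cases "R = E \<and> set xs \<subseteq> univ (Bk k) \<and> length xs = 2")
              case True
              then have sx: "set xs \<subseteq> univ (Bk k)" and R: "R = E" and l: "length xs = 2" by auto
              have mp: "map (\<psi> \<circ> m k' k) xs = map (\<lambda>u. (k', hk k u)) xs"
                using sx hkS that \<psi>\<phi> X_def unfolding m_def by (auto intro!: map_cong simp: subset_iff)
              have "set (map (m k' k) xs) \<subseteq> \<phi> ` X" using m_into[OF that] sx uB by auto
              then have "rel (pull B (univ (Bk k)) (m k' k)) R xs = rel ?I E (map (\<lambda>u. (k', hk k u)) xs)"
                using sx R by (simp add: B_def) (metis mp)
              also have "\<dots> = rel Ts E (map (hk k) xs)" using lang(4) by (simp add: I_rel_other o_def)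
              also have "\<dots> = rel (Bk k) R xs" using emb_apply[OF hkT[OF that(2)], of E xs] sx l R lang(5) by simp
              finally show ?thesis .
            next
              case False
              have "\<not> rel (Bk k) R xs" using False Bkstr(1)[OF that(2)] lang(5) unfolding is_struct_def by auto
              moreover have "\<not> rel (pull B (univ (Bk k)) (m k' k)) R xs"
              proof
                assume r: "rel (pull B (univ (Bk k)) (m k' k)) R xs"
                then have sx: "set xs \<subseteq> univ (Bk k)" and rr: "rel B R (map (m k' k) xs)" by auto
                then have R: "R = E" by (simp add: B_def)
                have "rel ?I E (map \<psi> (map (m k' k) xs))" using rr R by (simp add: B_def)
                then have "rel Ts E (map snd (map \<psi> (map (m k' k) xs)))" using lang(4) by (simp add: I_rel_other)
                then have "length xs = 2" using struct lang(5) unfolding is_struct_def by (metis length_map)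
                then show False using False sx R by simp
              qed
              ultimately show ?thesis by simp
            qed
          qed
        qed
        finally show ?thesis .
      qed
      have "\<forall>k\<in>K. \<exists>e. embedding Ls ar e (Ask k) (Bsk (\<sigma> k) k)"
        using BkA Ask_age Ask_red Bsk_age Bsk_red \<sigma>K by blast
      from bchoice[OF this] obtain e where e: "\<forall>k\<in>K. embedding Ls ar (e k) (Ask k) (Bsk (\<sigma> k) k)" by blast
      define F where "F x = m (\<sigma> (fst (f x))) (fst (f x)) (e (fst (f x)) x)" for x
      have Ffacts: "fst (f x) \<in> K" "x \<in> univ (Ask (fst (f x)))" "e (fst (f x)) x \<in> univ (Bk (fst (f x)))"
          "F x = \<phi> (\<sigma> (fst (f x)), hk (fst (f x)) (e (fst (f x)) x))"
          "(\<sigma> (fst (f x)), hk (fst (f x)) (e (fst (f x)) x)) \<in> X"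
          "F x \<in> univ Bs" "fst (gB (F x)) = PB (\<sigma> (fst (f x)))"
        if x: "x \<in> univ A" for x
      proof -
        let ?k = "fst (f x)"
        show k: "?k \<in> K" using x K_def by blast
        show xk: "x \<in> univ (Ask ?k)" using x by (simp add: Ask_def blk_def)
        have "e ?k x \<in> univ (Bsk (\<sigma> ?k) ?k)" using emb_into[OF bspec[OF e k] xk] .
        then show ek: "e ?k x \<in> univ (Bk ?k)" by (simp add: Bsk_def)
        show Fx: "F x = \<phi> (\<sigma> ?k, hk ?k (e ?k x))" by (simp add: F_def m_def)
        show X: "(\<sigma> ?k, hk ?k (e ?k x)) \<in> X" using \<sigma>K[OF k] hkS[OF k ek] X_def by simp
        show "F x \<in> univ Bs" using Fx uB X by simp
        show "fst (gB (F x)) = PB (\<sigma> ?k)" using Fx PB_eq \<sigma>K[OF k] hkS[OF k ek] by simp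
      qed
      have inblock: "rel As R xs = rel Bs R (map F xs)"
        if k: "k \<in> K" and R: "R \<in> Ls" and sx: "set xs \<subseteq> blk k" and l: "length xs = ar R" for k R xs
      proof -
        have "rel As R xs = rel (Ask k) R xs" using sx by (simp add: Ask_def)
        also have "\<dots> = rel (Bsk (\<sigma> k) k) R (map (e k) xs)"
          using emb_apply[OF bspec[OF e k] R] sx l by (simp add: Ask_def)
        also have "\<dots> = rel Bs R (map (m (\<sigma> k) k) (map (e k) xs))"
        proof -
          have "set (map (e k) xs) \<subseteq> univ (Bk k)"
            using sx emb_into[OF bspec[OF e k]] by (force simp: Ask_def Bsk_def)
          then show ?thesis by (simp add: Bsk_def)
        qed
        also have "map (m (\<sigma> k) k) (map (e k) xs) = map F xs"
          using sx unfolding F_def blk_def by (auto simp: subset_iff)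
        finally show ?thesis .
      qed
      have dBlem: "fst (gB (F x)) \<noteq> fst (gB (F y))"
        if x': "x \<in> univ A" and y': "y \<in> univ A" and d: "fst (f x) \<noteq> fst (f y)" for x y
      proof -
        have "\<sigma> (fst (f x)) \<noteq> \<sigma> (fst (f y))" using \<sigma>inj[OF Ffacts(1)[OF x'] Ffacts(1)[OF y']] d by blast
        then have "PB (\<sigma> (fst (f x))) \<noteq> PB (\<sigma> (fst (f y)))"
          using PBinj \<sigma>K[OF Ffacts(1)[OF x']] \<sigma>K[OF Ffacts(1)[OF y']] by (simp add: inj_on_eq_iff)
        then show ?thesis using Ffacts(7)[OF x'] Ffacts(7)[OF y'] by simp
      qed
      show "\<exists>f. embedding Ls ar f As Bs"
      proof (intro exI[of _ F])
        show "embedding Ls ar F As Bs" unfolding embedding_def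
        proof (intro conjI ballI allI impI)
          show "inj_on F (univ As)"
          proof (rule inj_onI)
            fix x y assume x: "x \<in> univ As" and y: "y \<in> univ As" and Fxy: "F x = F y"
            then have x': "x \<in> univ A" and y': "y \<in> univ A" using uA by auto
            have "(\<sigma> (fst (f x)), hk (fst (f x)) (e (fst (f x)) x)) = (\<sigma> (fst (f y)), hk (fst (f y)) (e (fst (f y)) y))"
              using Fxy Ffacts(4,5)[OF x'] Ffacts(4,5)[OF y'] \<phi>inj by (simp add: inj_on_eq_iff)
            then have s: "\<sigma> (fst (f x)) = \<sigma> (fst (f y))"
              and h: "hk (fst (f x)) (e (fst (f x)) x) = hk (fst (f y)) (e (fst (f y)) y)" by auto
            have kk: "fst (f x) = fst (f y)" using \<sigma>inj[OF Ffacts(1)[OF x'] Ffacts(1)[OF y'] s] .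
            have "e (fst (f x)) x = e (fst (f x)) y"
              using emb_inj[OF hkT[OF Ffacts(1)[OF x']] Ffacts(3)[OF x']] Ffacts(3)[OF y'] h kk by simp
            then show "x = y"
              using emb_inj[OF bspec[OF e Ffacts(1)[OF x']] Ffacts(2)[OF x']] Ffacts(2)[OF y'] kk by simp
          qed
          show "F ` univ As \<subseteq> univ Bs" using Ffacts(6) uA by auto
        next
          fix R xs assume R: "R \<in> Ls" and sxl: "set xs \<subseteq> univ As \<and> length xs = ar R"
          then have sx: "set xs \<subseteq> univ A" and l: "length xs = ar R" using uA by auto
          show "rel As R xs = rel Bs R (map F xs)"
          proof (cases "xs = []")
            case True
            then show ?thesis using emb_apply[OF gA R, of xs] emb_apply[OF gB R, of "[]"] l by simp
          next
            case False
            show ?thesis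
            proof (cases "\<forall>x\<in>set xs. fst (f x) = fst (f (hd xs))")
              case True
              let ?k = "fst (f (hd xs))"
              have "hd xs \<in> univ A" using False sx hd_in_set by blast
              then have "?k \<in> K" using K_def by blast
              moreover have "set xs \<subseteq> blk ?k" using True sx blk_def by auto
              ultimately show ?thesis using inblock R l by blast
            next
              case nb: False
              then obtain x y where xy: "x \<in> set xs" "y \<in> set xs" "fst (f x) \<noteq> fst (f y)"
                using False hd_in_set by blast
              have x': "x \<in> univ A" and y': "y \<in> univ A" using xy sx by auto
              have dA: "fst (gA x) \<noteq> fst (gA y)" using blockA[OF x' y'] xy(3) by simp
              have dB: "fst (gB (F x)) \<noteq> fst (gB (F y))" by (rule dBlem[OF x' y' xy(3)])
              have sxB: "set (map F xs) \<subseteq> univ Bs" using sx Ffacts(6) by auto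
              show ?thesis
              proof (cases "R = Lt")
                case False
                have "\<not> rel As R xs"
                  by (rule diff_block_other[OF gA R False]) (use sxl xy dA in auto)
                moreover have "\<not> rel Bs R (map F xs)"
                  by (rule diff_block_other[OF gB R False sxB _ _ _ dB]) (use l xy in auto)
                ultimately show ?thesis by simp
              next
                case True
                then have l2: "length xs = 2" using l lang(6) by simp
                then have "\<exists>a b. xs = [a,b]" by (auto simp: length_Suc_conv numeral_2_eq_2)
                then obtain a b where ab: "xs = [a,b]" by blast
                then have a: "a \<in> univ A" and b: "b \<in> univ A" using sx by auto
                have kab: "fst (f a) \<noteq> fst (f b)" using xy ab by auto
                have dA': "fst (gA a) \<noteq> fst (gA b)" using blockA[OF a b] kab by simp
                have dB': "fst (gB (F a)) \<noteq> fst (gB (F b))" by (rule dBlem[OF a b kab])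
                have "rel As Lt [a,b] = prec (fst (gA a)) (fst (gA b))"
                  using diff_block_Lt[OF gA lang(3) lang(6) _ _ dA'] a b uA by simp
                also have "\<dots> = prec (PA (fst (f a))) (PA (fst (f b)))" using PA_eq a b by simp
                also have "\<dots> = prec (PB (\<sigma> (fst (f a)))) (PB (\<sigma> (fst (f b))))"
                  using \<sigma>ord Ffacts(1)[OF a] Ffacts(1)[OF b] by simp
                also have "\<dots> = prec (fst (gB (F a))) (fst (gB (F b)))"
                  using Ffacts(7)[OF a] Ffacts(7)[OF b] by simp
                also have "\<dots> = rel Bs Lt [F a, F b]"
                  using diff_block_Lt[OF gB lang(3) lang(6) _ _ dB'] Ffacts(6)[OF a] Ffacts(6)[OF b] by simp
                finally show ?thesis using True ab by simp
              qed
            qed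
          qed
        qed
      qed
    qed
  qed
qed

end
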